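(* Let $p$ be a prime, $m,t\ge 1$, $B=\mathrm{GF}(p^m)$ and $F=\mathrm{GF}(p^{mt})$, and assume that $t$ is divisible by $p$ (the characteristic of $F$). Let $n=|F|=|B|^t$, $k=n(1-1/|B|)$, and let $\mathcal{C}=\mathrm{RS}(F,k)=\{(f(\alpha))_{\alpha\in F} : f\in F[x],\ \deg f\le k-1\}$, where the symbol $f(\alpha)$ is stored at the node indexed by $\alpha$. Let $K=\ker(\mathrm{Tr}_{F/B})$. Suppose $f(\alpha^* )$, $f(\overline{\alpha})$, $f(\alpha')$ are three erased symbols, with $\alpha^*,\overline{\alpha},\alpha'$ distinct, such that $$\left\{\frac{\overline{\alpha}-\alpha^*}{\overline{\alpha}-\alpha'},\ \frac{\alpha'-\overline{\alpha}}{\alpha'-\alpha^*},\ \frac{\alpha^*-\alpha'}{\alpha^*-\overline{\alpha}}\right\}\cap K\neq\varnothing.$$ Then there exists a distributed repair scheme in which all three erased symbols are recovered with a total repair bandwidth of $3(n-1)$ sub-symbols (elements of $B$).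
   Context: Elements of $F$ are called symbols and elements of $B$ sub-symbols. The trace is $\mathrm{Tr}_{F/B}(x)=\sum_{i=0}^{t-1}x^{|B|^i}$. In distributed repair, each erased symbol is reconstructed at its own replacement node; replacement nodes download sub-symbols from surviving nodes (computed from the surviving node's stored symbol) and may exchange sub-symbols among themselves (computed from data they have already obtained). The repair bandwidth is the total number of sub-symbols downloaded by all replacement nodes. *)

theory Defs
  imports "HOL-Computational_Algebra.Polynomial" "HOL-Library.Cardinality"
begin

definition subfield_B :: "nat \<Rightarrow> 'a::{finite,field} set" where
  "subfield_B q = {x. x ^ q = x}"

definition trace_FB :: "nat \<Rightarrow> nat \<Rightarrow> 'a::{finite,field} \<Rightarrow> 'a" where
  "trace_FB q t x = (\<Sum>i<t. x ^ (q ^ i))"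

definition RS_code :: "nat \<Rightarrow> ('a::{finite,field} \<Rightarrow> 'a) set" where
  "RS_code k = {(\<lambda>\<alpha>. poly f \<alpha>) | f. degree f \<le> k - 1}"

text \<open>Replacement nodes are indexed 0,1,2,... (replacement node j
  rebuilds the erased symbol at position E!j).  A protocol is a list of transmissions, each
  carrying ONE sub-symbol (element of B), executed in order.  A transmission (src, dst, g):
  src = Inl alpha: surviving node alpha sends g [c alpha], computed from its stored symbol;
  src = Inr j: replacement node j sends g applied to the list of sub-symbols it has received
  so far.\<close>
type_synonym 'a transmission = "('a + nat) \<times> nat \<times> ('a list \<Rightarrow> 'a)"

definition tx_step :: "('a \<Rightarrow> 'a) \<Rightarrow> 'a transmission \<Rightarrow> (nat \<Rightarrow> 'a list) \<Rightarrow> (nat \<Rightarrow> 'a list)" where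
  "tx_step c m st = (case m of (src, dst, g) \<Rightarrow>
     st(dst := st dst @ [g (case src of Inl \<alpha> \<Rightarrow> [c \<alpha>] | Inr j \<Rightarrow> st j)]))"

definition run_protocol :: "('a \<Rightarrow> 'a) \<Rightarrow> 'a transmission list \<Rightarrow> nat \<Rightarrow> 'a list" where
  "run_protocol c ms = fold (tx_step c) ms (\<lambda>_. [])"

definition valid_protocol :: "'a set \<Rightarrow> 'a list \<Rightarrow> 'a transmission list \<Rightarrow> bool" where
  "valid_protocol B E ms \<longleftrightarrow>
     (\<forall>(src, dst, g) \<in> set ms.
        dst < length E \<and>
        (case src of Inl \<alpha> \<Rightarrow> \<alpha> \<notin> set E | Inr j \<Rightarrow> j < length E) \<and>
        (\<forall>xs. g xs \<in> B))"

definition repairs :: "('a \<Rightarrow> 'a) set \<Rightarrow> 'a list \<Rightarrow> 'a transmission list \<Rightarrow> bool" where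
  "repairs C E ms \<longleftrightarrow>
     (\<exists>dec :: nat \<Rightarrow> 'a list \<Rightarrow> 'a. \<forall>c \<in> C. \<forall>j < length E. dec j (run_protocol c ms j) = c (E ! j))"

definition distributed_repair_scheme :: "'a set \<Rightarrow> ('a \<Rightarrow> 'a) set \<Rightarrow> 'a list \<Rightarrow> nat \<Rightarrow> bool" where
  "distributed_repair_scheme B C E b \<longleftrightarrow>
     (\<exists>ms. valid_protocol B E ms \<and> repairs C E ms \<and> length ms = b)"

end

theory Submission
  imports Defs "HOL-Computational_Algebra.Primes"
begin


lemma ofnat_card_zero: "of_nat CARD('a::{finite,field}) = (0::'a)"
proof -
  have "(\<Sum>x\<in>(UNIV::'a set). x) = (\<Sum>x\<in>UNIV. x + 1)"
    by (rule sum.reindex_bij_witness[of _ "\<lambda>y. y + 1" "\<lambda>y. y - 1"]) auto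
  also have "\<dots> = (\<Sum>x\<in>UNIV. x) + (\<Sum>x\<in>(UNIV::'a set). 1)"
    by (rule sum.distrib)
  also have "(\<Sum>x\<in>(UNIV::'a set). 1) = of_nat CARD('a)" by simp
  finally show ?thesis by simp
qed

lemma char_eq:
  assumes "prime p" "CARD('a::{finite,field}) = p ^ e" "e \<ge> 1"
  shows "CHAR('a) = p"
proof -
  have pos: "CHAR('a) > 0" by (rule finite_imp_CHAR_pos) simp
  have pr: "prime CHAR('a)" using prime_CHAR_semidom[OF pos] .
  have "CHAR('a) dvd p ^ e" using ofnat_card_zero[where 'a='a] assms(2)
    by (metis of_nat_eq_0_iff_char_dvd)
  then have "CHAR('a) dvd p" using pr prime_dvd_power by blast
  then show ?thesis using pr assms(1) primes_dvd_imp_eq by blast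
qed

lemma pow_card_same: "(x::'a::{finite,field}) ^ CARD('a) = x"
proof (cases "x = 0")
  case False
  have "x * (\<Prod>y\<in>UNIV-{0}. x * y) = x * x ^ (card (UNIV :: 'a set) - 1) * \<Prod>(UNIV-{0})"
    by (simp add: prod.distrib mult_ac)
  also have "x * x ^ (card (UNIV :: 'a set) - 1) = x ^ Suc (card (UNIV :: 'a set) - 1)"
    by (subst power_Suc) auto
  also have "Suc (card (UNIV :: 'a set) - 1) = card (UNIV :: 'a set)"
    using finite_UNIV_card_ge_0[where ?'a = 'a] by simp
  also have "(\<Prod>y\<in>UNIV-{0}. x * y) = (\<Prod>y\<in>UNIV-{0}. y)"
    by (rule prod.reindex_bij_witness[of _ "\<lambda>y. y / x" "\<lambda>y. x * y"]) (use False in auto)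
  finally show ?thesis
    by simp
qed (use finite_UNIV_card_ge_0[where ?'a = 'a] in auto)

lemma power_sum_zero:
  assumes "i < CARD('a::{finite,field}) - 1"
  shows "(\<Sum>x\<in>(UNIV::'a set). x ^ i) = 0"
proof (cases "i = 0")
  case True
  then show ?thesis using ofnat_card_zero[where 'a='a] by simp
next
  case False
  let ?P = "monom (1::'a) i - 1"
  have Pnz: "?P \<noteq> 0"
  proof
    assume "?P = 0"
    then have "coeff ?P i = 0" by simp
    then show False using False by (simp add: coeff_monom)
  qed
  have degP: "degree ?P \<le> i" by (intro degree_diff_le) (auto simp: degree_monom_le)
  have "\<exists>g::'a. g \<noteq> 0 \<and> g ^ i \<noteq> 1"
  proof (rule ccontr)
    assume "\<not> ?thesis"
    then have "UNIV - {0} \<subseteq> {x. poly ?P x = 0}" by (auto simp: poly_monom)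
    then have "card (UNIV - {0::'a}) \<le> card {x. poly ?P x = 0}"
      by (intro card_mono poly_roots_finite Pnz)
    also have "\<dots> \<le> i" using card_poly_roots_bound[OF Pnz] degP by simp
    finally show False using assms by (simp add: card_Diff_singleton)
  qed
  then obtain g :: 'a where g: "g \<noteq> 0" "g ^ i \<noteq> 1" by blast
  have "(\<Sum>x\<in>(UNIV::'a set). x ^ i) = (\<Sum>x\<in>UNIV. (g * x) ^ i)"
    by (rule sum.reindex_bij_witness[of _ "\<lambda>y. g * y" "\<lambda>y. y / g"]) (use g in auto)
  also have "\<dots> = g ^ i * (\<Sum>x\<in>UNIV. x ^ i)"
    by (simp add: power_mult_distrib sum_distrib_left)
  finally have "(g ^ i - 1) * (\<Sum>x\<in>(UNIV::'a set). x ^ i) = 0" by (simp add: algebra_simps)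
  then show ?thesis using g by simp
qed

lemma poly_sum_zero:
  assumes "degree h < CARD('a::{finite,field}) - 1"
  shows "(\<Sum>x\<in>(UNIV::'a set). poly h x) = 0"
proof -
  have "(\<Sum>x\<in>(UNIV::'a set). poly h x) = (\<Sum>x\<in>UNIV. \<Sum>i\<le>degree h. coeff h i * x ^ i)"
    by (simp add: poly_altdef)
  also have "\<dots> = (\<Sum>i\<le>degree h. coeff h i * (\<Sum>x\<in>UNIV. x ^ i))"
    by (subst sum.swap) (simp add: sum_distrib_left)
  also have "\<dots> = 0" using assms by (intro sum.neutral) (simp add: power_sum_zero)
  finally show ?thesis .
qed



lemma frob_add:
  assumes "prime p" "CHAR('a::{finite,field}) = p"
  shows "((x::'a) + y) ^ ((p ^ m) ^ i) = x ^ ((p ^ m) ^ i) + y ^ ((p ^ m) ^ i)"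
  by (rule freshmans_dream'[where n="m*i"]) (use assms in \<open>auto simp: power_mult\<close>)

lemma frob_sum:
  assumes "prime p" "CHAR('a::{finite,field}) = p"
  shows "(sum (f::'b \<Rightarrow> 'a) A) ^ ((p ^ m) ^ i) = (\<Sum>a\<in>A. f a ^ ((p ^ m) ^ i))"
  by (rule freshmans_dream_sum'[where n="m*i"]) (use assms in \<open>auto simp: power_mult\<close>)

lemma frob_diff:
  assumes "prime p" "CHAR('a::{finite,field}) = p"
  shows "((x::'a) - y) ^ ((p ^ m) ^ i) = x ^ ((p ^ m) ^ i) - y ^ ((p ^ m) ^ i)"
proof -
  have "((x - y) + y) ^ ((p ^ m) ^ i) = (x - y) ^ ((p ^ m) ^ i) + y ^ ((p ^ m) ^ i)"
    by (rule frob_add[OF assms])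
  then show ?thesis by (simp add: algebra_simps)
qed

lemma B_pow:
  assumes "(b::'a::field) ^ q = b"
  shows "b ^ (q ^ i) = b"
proof (induction i)
  case (Suc i)
  have "b ^ (q ^ Suc i) = (b ^ q) ^ (q ^ i)" by (simp add: power_mult mult.commute)
  then show ?case using assms Suc by simp
qed simp

context
  fixes p m t :: nat
  assumes pr: "prime p" and ch: "CHAR('a::{finite,field}) = p"
    and cardF: "CARD('a) = (p ^ m) ^ t"
begin

lemma tr_add: "trace_FB (p ^ m) t ((x::'a) + y) = trace_FB (p ^ m) t x + trace_FB (p ^ m) t y"
  unfolding trace_FB_def by (simp add: frob_add[OF pr ch] sum.distrib)

lemma tr_diff: "trace_FB (p ^ m) t ((x::'a) - y) = trace_FB (p ^ m) t x - trace_FB (p ^ m) t y"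
  unfolding trace_FB_def by (simp add: frob_diff[OF pr ch] sum_subtractf)

lemma tr_scale:
  assumes "(b::'a) \<in> subfield_B (p ^ m)"
  shows "trace_FB (p ^ m) t (b * x) = b * trace_FB (p ^ m) t x"
  using assms unfolding trace_FB_def subfield_B_def
  by (simp add: power_mult_distrib B_pow sum_distrib_left)

lemma tr_one: "p dvd t \<Longrightarrow> trace_FB (p ^ m) t (1::'a) = 0"
  unfolding trace_FB_def using ch by (simp add: of_nat_eq_0_iff_char_dvd)

lemma tr_in_B: "trace_FB (p ^ m) t (x::'a) \<in> subfield_B (p ^ m)"
proof -
  let ?q = "p ^ m"
  let ?f = "\<lambda>i. x ^ (?q ^ i)"
  have "(trace_FB ?q t x) ^ ?q = (\<Sum>i<t. ?f i ^ (?q ^ 1))"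
    unfolding trace_FB_def using frob_sum[OF pr ch, of ?f "{..<t}" m 1] by simp
  also have "\<dots> = (\<Sum>i<t. ?f (Suc i))"
    by (simp add: power_mult[symmetric] mult.commute)
  also have "\<dots> = (\<Sum>i<Suc t. ?f i) - ?f 0"
    by (subst sum.lessThan_Suc_shift) simp
  also have "\<dots> = (\<Sum>i<t. ?f i) + ?f t - ?f 0" by simp
  also have "?f t = x" using pow_card_same[of x] cardF by simp
  finally show ?thesis unfolding subfield_B_def trace_FB_def by simp
qed

lemma B_zero: "(0::'a) \<in> subfield_B (p ^ m)"
  using pr unfolding subfield_B_def by (simp add: prime_gt_0_nat)

lemma B_diff: "(x::'a) \<in> subfield_B (p ^ m) \<Longrightarrow> y \<in> subfield_B (p ^ m) \<Longrightarrow> x - y \<in> subfield_B (p ^ m)"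
  unfolding subfield_B_def using frob_diff[OF pr ch, of x y m 1] by simp

lemma B_mult: "(x::'a) \<in> subfield_B (p ^ m) \<Longrightarrow> y \<in> subfield_B (p ^ m) \<Longrightarrow> x * y \<in> subfield_B (p ^ m)"
  unfolding subfield_B_def by (simp add: power_mult_distrib)

end


context
  fixes p m t :: nat
  assumes pr: "prime p" and ch: "CHAR('a::{finite,field}) = p"
    and cardF: "CARD('a) = (p ^ m) ^ t" and m1: "m \<ge> 1" and t1: "t \<ge> 1"
begin

lemma key_identity:
  fixes f :: "'a poly"
  assumes degf: "degree f \<le> CARD('a) - CARD('a) div (p ^ m) - 1"
  shows "poly f \<beta> = - (\<Sum>\<alpha>\<in>UNIV-{\<beta>}. (\<alpha> - \<beta>) * trace_FB (p ^ m) t (poly f \<alpha> / (\<alpha> - \<beta>)))"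
proof -
  define q where "q = p ^ m"
  define n where "n = CARD('a)"
  have q2: "q \<ge> 2" unfolding q_def using pr m1
  proof -
    have "p \<ge> 2" using pr by (rule prime_ge_2_nat)
    moreover have "p ^ 1 \<le> p ^ m" using m1 \<open>p \<ge> 2\<close> by (intro power_increasing) auto
    ultimately show "p ^ m \<ge> 2" by simp
  qed
  obtain t' where tt: "t = Suc t'" using t1 by (cases t) auto
  have nq: "n = q * q ^ t'" unfolding n_def q_def using cardF tt by simp
  have ndiv: "n div q = q ^ t'" using nq q2 by simp
  have qt'1: "q ^ t' \<ge> 1" using q2 by simp
  have n2: "n \<ge> 2 * q ^ t'" using nq q2 by simp
  let ?T = "\<lambda>\<alpha>. (\<alpha> - \<beta>) * trace_FB q t (poly f \<alpha> / (\<alpha> - \<beta>))"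
  let ?F = "\<lambda>j. \<Sum>\<alpha>\<in>UNIV-{\<beta>}. (\<alpha> - \<beta>) * (poly f \<alpha> / (\<alpha> - \<beta>)) ^ (q ^ j)"
  have sw: "(\<Sum>\<alpha>\<in>UNIV-{\<beta>}. ?T \<alpha>) = (\<Sum>j<t. ?F j)"
  proof -
    have "(\<Sum>\<alpha>\<in>UNIV-{\<beta>}. ?T \<alpha>) = (\<Sum>\<alpha>\<in>UNIV-{\<beta>}. \<Sum>j<t. (\<alpha> - \<beta>) * (poly f \<alpha> / (\<alpha> - \<beta>)) ^ (q ^ j))"
      unfolding trace_FB_def by (simp add: sum_distrib_left)
    also have "\<dots> = (\<Sum>j<t. ?F j)" by (rule sum.swap)
    finally show ?thesis .
  qed
  have F0: "?F 0 = - poly f \<beta>"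
  proof -
    have "?F 0 = (\<Sum>\<alpha>\<in>UNIV-{\<beta>}. poly f \<alpha>)" by (intro sum.cong) auto
    also have "\<dots> = (\<Sum>\<alpha>\<in>UNIV. poly f \<alpha>) - poly f \<beta>"
      by (simp add: sum_diff1)
    also have "(\<Sum>\<alpha>\<in>UNIV. poly f \<alpha>) = 0"
      by (rule poly_sum_zero) (use degf n2 qt'1 in \<open>simp add: n_def[symmetric] q_def[symmetric] ndiv\<close>)
    finally show ?thesis by simp
  qed
  have Fj: "?F (Suc j) = 0" if j: "j < t'" for j
  proof -
    define Q where "Q = q ^ Suc j"
    define R where "R = q ^ (t - Suc j) - 1"
    have QR: "Q * (R + 1) = n"
    proof -
      have "q ^ (t - Suc j) \<ge> 1" using q2 by simp
      then have "R + 1 = q ^ (t - Suc j)" unfolding R_def by simp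
      then have "Q * (R + 1) = q ^ Suc j * q ^ (t - Suc j)" unfolding Q_def by simp
      also have "\<dots> = q ^ t" using j tt by (simp flip: power_add)
      finally show ?thesis unfolding n_def q_def using cardF by simp
    qed
    have R1: "R \<ge> 1"
    proof -
      have "t - Suc j \<ge> 1" using j tt by simp
      then have "q ^ (t - Suc j) \<ge> q ^ 1" using q2 by (intro power_increasing) auto
      then show ?thesis unfolding R_def using q2 by simp
    qed
    have Rle: "R \<le> q ^ t' - 1"
    proof -
      have "q ^ (t - Suc j) \<le> q ^ t'" using q2 tt by (intro power_increasing) auto
      then show ?thesis unfolding R_def by simp
    qed
    define h where "h = [:-\<beta>, 1:] ^ R * f"
    have polyh: "poly h \<alpha> = (\<alpha> - \<beta>) ^ R * poly f \<alpha>" for \<alpha>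
      unfolding h_def by (simp add: poly_power)
    have degh: "degree h < CARD('a) - 1"
    proof -
      have "degree h \<le> R + degree f" unfolding h_def
        using degree_mult_le[of "[:-\<beta>, 1:] ^ R" f] degree_linear_power[of "-\<beta>" R] by simp
      also have "\<dots> \<le> q ^ t' - 1 + (n - q ^ t' - 1)"
        using Rle degf by (simp add: n_def[symmetric] q_def[symmetric] ndiv)
      finally show ?thesis using n2 qt'1 unfolding n_def by linarith
    qed
    have term_eq: "(\<alpha> - \<beta>) * (poly f \<alpha> / (\<alpha> - \<beta>)) ^ Q = (poly h \<alpha>) ^ Q" if "\<alpha> \<noteq> \<beta>" for \<alpha>
    proof -
      define g where "g = \<alpha> - \<beta>"
      have g0: "g \<noteq> 0" using that g_def by simp
      have gn: "g ^ (R * Q) * g ^ Q = g"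
      proof -
        have "g ^ (R * Q) * g ^ Q = g ^ (R * Q + Q)" by (rule power_add[symmetric])
        also have "\<dots> = g ^ (Q * (R + 1))" by (rule arg_cong[where f="\<lambda>e. g ^ e"]) (simp add: algebra_simps)
        also have "\<dots> = g" using QR pow_card_same[of g] n_def by simp
        finally show ?thesis .
      qed
      have "(poly h \<alpha>) ^ Q = g ^ (R * Q) * poly f \<alpha> ^ Q"
        by (simp add: polyh g_def power_mult_distrib power_mult)
      also have "\<dots> = g * (poly f \<alpha> / g) ^ Q"
      proof -
        have "g ^ (R * Q) = g / g ^ Q" using gn g0 by (simp add: eq_divide_eq)
        then show ?thesis by (simp add: power_divide)
      qed
      finally show ?thesis by (simp add: g_def)
    qed
    have "?F (Suc j) = (\<Sum>\<alpha>\<in>UNIV-{\<beta>}. (\<alpha> - \<beta>) * (poly f \<alpha> / (\<alpha> - \<beta>)) ^ Q)"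
      unfolding Q_def by (rule refl)
    also have "\<dots> = (\<Sum>\<alpha>\<in>UNIV-{\<beta>}. (poly h \<alpha>) ^ Q)"
      by (intro sum.cong refl) (simp add: term_eq)
    also have "\<dots> = (\<Sum>\<alpha>\<in>UNIV. (poly h \<alpha>) ^ Q)"
    proof -
      have "(poly h \<beta>) ^ Q = 0" using R1 q2 unfolding Q_def by (simp add: polyh)
      then show ?thesis by (simp add: sum_diff1)
    qed
    also have "\<dots> = (\<Sum>\<alpha>\<in>UNIV. poly h \<alpha>) ^ Q"
      unfolding Q_def q_def by (rule frob_sum[OF pr ch, symmetric])
    also have "\<dots> = 0" using poly_sum_zero[OF degh] unfolding Q_def using q2 by simp
    finally show ?thesis .
  qed
  have "(\<Sum>j<t. ?F j) = ?F 0 + (\<Sum>j<t'. ?F (Suc j))"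
    unfolding tt by (rule sum.lessThan_Suc_shift)
  also have "\<dots> = - poly f \<beta>" using F0 Fj by simp
  finally show ?thesis using sw q_def by simp
qed

end


definition projB :: "'a set \<Rightarrow> 'a \<Rightarrow> 'a::zero" where
  "projB B v = (if v \<in> B then v else 0)"

definition Sv :: "'a list \<Rightarrow> 'a \<Rightarrow> 'a list \<Rightarrow> 'a::field" where
  "Sv L e v = - (\<Sum>k<length L. (L ! k - e) * v ! k)"

definition recv :: "'a list \<Rightarrow> 'a \<Rightarrow> 'a \<Rightarrow> 'a \<Rightarrow> 'a list \<Rightarrow> 'a::field" where
  "recv L ei ej el v = Sv L ei v - (ej - ei) * v ! length L - (el - ei) * v ! Suc (length L)"

definition dl :: "'a set \<Rightarrow> ('a \<Rightarrow> 'a) \<Rightarrow> 'a list \<Rightarrow> 'a \<Rightarrow> nat \<Rightarrow> 'a::field transmission list" where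
  "dl B tr L e i = map (\<lambda>\<alpha>. (Inl \<alpha>, i, \<lambda>v. projB B (tr (hd v / (\<alpha> - e))))) L"

definition proto :: "'a set \<Rightarrow> ('a \<Rightarrow> 'a) \<Rightarrow> 'a list \<Rightarrow> 'a list \<Rightarrow> nat \<Rightarrow> nat \<Rightarrow> nat \<Rightarrow> 'a::field transmission list" where
  "proto B tr E L x y z =
    (let ax = E ! x; ay = E ! y; az = E ! z in
     dl B tr L (E ! 0) 0 @ dl B tr L (E ! 1) 1 @ dl B tr L (E ! 2) 2 @
     [(Inr y, z, \<lambda>v. projB B (tr (Sv L ay v / (ay - az)))),
      (Inr z, y, \<lambda>v. projB B (tr (Sv L az v / (az - ay)))),
      (Inr y, x, \<lambda>v. projB B (tr (Sv L ay v / (ay - ax)) - v ! length L * tr ((az - ay) / (ay - ax)))),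
      (Inr z, x, \<lambda>v. projB B (tr (Sv L az v / (az - ax)) - v ! length L * tr ((ay - az) / (az - ax)))),
      (Inr x, y, \<lambda>v. projB B (tr (recv L ax ay az v / (ax - ay)))),
      (Inr x, z, \<lambda>v. projB B (tr (recv L ax ay az v / (ax - az))))])"

lemma fold_dl:
  "fold (tx_step c) (dl B tr L e i) st = st(i := st i @ map (\<lambda>\<alpha>. projB B (tr (c \<alpha> / (\<alpha> - e)))) L)"
proof (induction L arbitrary: st)
  case Nil then show ?case by (simp add: dl_def)
next
  case (Cons a L)
  let ?m = "(Inl a, i, \<lambda>v. projB B (tr (hd v / (a - e)))) :: 'a transmission"
  have "fold (tx_step c) (dl B tr (a # L) e i) st = fold (tx_step c) (dl B tr L e i) (tx_step c ?m st)"
    by (simp add: dl_def)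
  also have "\<dots> = (tx_step c ?m st)(i := (tx_step c ?m st) i @ map (\<lambda>\<alpha>. projB B (tr (c \<alpha> / (\<alpha> - e)))) L)"
    by (rule Cons)
  also have "tx_step c ?m st = st(i := st i @ [projB B (tr (c a / (a - e)))])"
    by (simp add: tx_step_def)
  finally show ?case by (simp add: fun_eq_iff)
qed

lemma Sv_app: "length u = length L \<Longrightarrow> Sv L e (u @ w) = Sv L e u"
  unfolding Sv_def by (intro arg_cong[where f=uminus] sum.cong) (auto simp: nth_append)

lemma sum_nth_distinct: "distinct L \<Longrightarrow> (\<Sum>k<length L. g (L ! k)) = sum g (set L)"
  by (simp add: sum_list_distinct_conv_sum_set[symmetric] sum_list_sum_nth atLeast0LessThan)



context
  fixes p m t :: nat
  assumes pr: "prime p" and ch: "CHAR('a::{finite,field}) = p"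
    and cardF: "CARD('a) = (p ^ m) ^ t" and m1: "m \<ge> 1" and t1: "t \<ge> 1" and pt: "p dvd t"
begin

abbreviation TR :: "'a \<Rightarrow> 'a" where "TR \<equiv> trace_FB (p ^ m) t"
abbreviation BB :: "'a set" where "BB \<equiv> subfield_B (p ^ m)"

lemma tr_zero: "TR 0 = 0"
  using tr_diff[OF pr ch cardF, of 0 0] by simp

lemma tr_uminus: "TR (- w) = - TR w"
  using tr_diff[OF pr ch cardF, of 0 w] tr_zero by simp

lemma tr_m1: "TR (-1) = 0"
  using tr_uminus[of 1] tr_one[OF pr ch cardF pt] by simp

lemma projB_in: "v \<in> BB \<Longrightarrow> projB BB v = v"
  by (simp add: projB_def)

lemma G:
  assumes "bi \<noteq> bj" "Tjl \<in> BB" "Tji \<in> BB" "fj = Sj - (bl - bj) * Tjl - (bi - bj) * Tji"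
  shows "TR (Sj / (bj - bi)) = TR (fj / (bj - bi)) + Tjl * TR ((bl - bj) / (bj - bi))"
proof -
  have ne: "bj - bi \<noteq> 0" using assms(1) by simp
  have S: "Sj = fj + (bl - bj) * Tjl + (bi - bj) * Tji" using assms(4) by (simp add: algebra_simps)
  have m: "(bi - bj) / (bj - bi) = -1" using ne by (simp add: divide_eq_eq)
  have "Sj / (bj - bi) = fj / (bj - bi) + Tjl * ((bl - bj) / (bj - bi)) + Tji * ((bi - bj) / (bj - bi))"
    unfolding S by (simp add: add_divide_distrib mult.commute)
  then have "Sj / (bj - bi) = (fj / (bj - bi) + Tjl * ((bl - bj) / (bj - bi))) + Tji * (-1)"
    using m by simp
  then have "TR (Sj / (bj - bi)) = TR (fj / (bj - bi)) + TR (Tjl * ((bl - bj) / (bj - bi))) + TR (Tji * (-1))"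
    by (simp only: tr_add[OF pr ch cardF])
  also have "TR (Tji * (-1)) = 0" using tr_scale[OF pr ch cardF assms(3), of "-1"] tr_m1 by (simp only:) simp
  also have "TR (Tjl * ((bl - bj) / (bj - bi))) = Tjl * TR ((bl - bj) / (bj - bi))"
    by (rule tr_scale[OF pr ch cardF assms(2)])
  finally show ?thesis by simp
qed

lemma main_repair:
  fixes E L :: "'a list"
  assumes lenE: "length E = 3" and dE: "distinct E"
    and xyz: "x < 3" "y < 3" "z < 3" "x \<noteq> y" "y \<noteq> z" "x \<noteq> z"
    and cond: "TR ((E ! y - E ! x) / (E ! y - E ! z)) = 0"
    and setL: "set L = UNIV - set E" and dL: "distinct L"
  shows "valid_protocol BB E (proto BB TR E L x y z)
      \<and> repairs (RS_code (CARD('a) - CARD('a) div (p ^ m))) E (proto BB TR E L x y z)"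
proof
  have B0: "(0::'a) \<in> BB" by (rule B_zero[OF pr ch cardF])
  have projBB: "projB BB v \<in> BB" for v using B0 by (simp add: projB_def)
  show "valid_protocol BB E (proto BB TR E L x y z)"
    unfolding valid_protocol_def proto_def Let_def dl_def
    using lenE xyz setL projBB by auto
next
  define ax where "ax = E ! x"
  define ay where "ay = E ! y"
  define az where "az = E ! z"
  have dxy: "ax \<noteq> ay" "ay \<noteq> az" "ax \<noteq> az" "ay \<noteq> ax" "az \<noteq> ay" "az \<noteq> ax"
    unfolding ax_def ay_def az_def using dE lenE xyz by (auto simp: nth_eq_iff_index_eq)
  have all3: "k = x \<or> k = y \<or> k = z" if "k < 3" for k using that xyz by arith
  have setE: "set E = {ax, ay, az}"
  proof
    show "set E \<subseteq> {ax, ay, az}"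
    proof
      fix e assume "e \<in> set E"
      then obtain k where "k < 3" "e = E ! k" using lenE by (auto simp: in_set_conv_nth)
      then show "e \<in> {ax, ay, az}" using all3 unfolding ax_def ay_def az_def by blast
    qed
    show "{ax, ay, az} \<subseteq> set E" unfolding ax_def ay_def az_def using lenE xyz by auto
  qed
  have ww: "TR ((ay - ax) / (ay - az)) = 0" using cond unfolding ax_def ay_def az_def .
  define w where "w = (ay - ax) / (ay - az)"
  have c1: "TR ((ax - ay) / (ay - az)) = 0"
  proof -
    have "(ax - ay) / (ay - az) = - w" unfolding w_def by (simp add: minus_divide_left)
    then show ?thesis using tr_uminus ww w_def by simp
  qed
  have c2: "TR ((ax - az) / (az - ay)) = 0"
  proof -
    have "(ax - az) / (az - ay) = w - 1" unfolding w_def using dxy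
      by (simp add: field_simps)
    then show ?thesis using tr_diff[OF pr ch cardF, of w 1] tr_one[OF pr ch cardF pt] ww w_def by simp
  qed
  show "repairs (RS_code (CARD('a) - CARD('a) div (p ^ m))) E (proto BB TR E L x y z)"
    unfolding repairs_def
  proof (intro exI[of _ "\<lambda>j v. if j = x then recv L ax ay az v else if j = y then recv L ay az ax v
                              else recv L az ay ax v"] ballI allI impI)
    fix c :: "'a \<Rightarrow> 'a" and j assume cC: "c \<in> RS_code (CARD('a) - CARD('a) div (p ^ m))" and j: "j < length E"
    obtain f where cf: "c = (\<lambda>\<alpha>. poly f \<alpha>)" and degf: "degree f \<le> CARD('a) - CARD('a) div (p ^ m) - 1"
      using cC unfolding RS_code_def by blast
    define TT where "TT e \<beta> = TR (c \<beta> / (\<beta> - e))" for e \<beta>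
    define SS where "SS e = - (\<Sum>\<alpha>\<in>set L. (\<alpha> - e) * TT e \<alpha>)" for e
    have TTB: "TT e \<beta> \<in> BB" for e \<beta> unfolding TT_def by (rule tr_in_B[OF pr ch cardF])
    have KI: "c i = SS i - (j' - i) * TT i j' - (l - i) * TT i l"
      if "{i, j', l} = {ax, ay, az}" "i \<noteq> j'" "j' \<noteq> l" "i \<noteq> l" for i j' l
    proof -
      have U: "UNIV - {i} = insert j' (insert l (set L))" using that setL setE by auto
      have nL: "j' \<notin> set L" "l \<notin> set L" using that setL setE by auto
      have "c i = - (\<Sum>\<alpha>\<in>UNIV-{i}. (\<alpha> - i) * TT i \<alpha>)"
        unfolding TT_def cf by (rule key_identity[OF pr ch cardF m1 t1 degf])
      also have "\<dots> = SS i - (j' - i) * TT i j' - (l - i) * TT i l"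
        unfolding U SS_def using nL that by simp
      finally show ?thesis .
    qed
    have KIx: "c ax = SS ax - (ay - ax) * TT ax ay - (az - ax) * TT ax az" by (rule KI) (use dxy in auto)
    have KIy: "c ay = SS ay - (ax - ay) * TT ay ax - (az - ay) * TT ay az" by (rule KI) (use dxy in auto)
    have KIy': "c ay = SS ay - (az - ay) * TT ay az - (ax - ay) * TT ay ax" by (rule KI) (use dxy in auto)
    have KIz: "c az = SS az - (ax - az) * TT az ax - (ay - az) * TT az ay" by (rule KI) (use dxy in auto)
    have KIz': "c az = SS az - (ay - az) * TT az ay - (ax - az) * TT az ax" by (rule KI) (use dxy in auto)
    have v1: "projB BB (TR (SS ay / (ay - az))) = TT az ay"
    proof -
      have "TR (SS ay / (ay - az)) = TR (c ay / (ay - az)) + TT ay ax * TR ((ax - ay) / (ay - az))"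
        by (rule G[OF _ TTB TTB KIy]) (use dxy in auto)
      then show ?thesis using c1 TTB projB_in by (simp add: TT_def)
    qed
    have v2: "projB BB (TR (SS az / (az - ay))) = TT ay az"
    proof -
      have "TR (SS az / (az - ay)) = TR (c az / (az - ay)) + TT az ax * TR ((ax - az) / (az - ay))"
        by (rule G[OF _ TTB TTB KIz]) (use dxy in auto)
      then show ?thesis using c2 TTB projB_in by (simp add: TT_def)
    qed
    have v3: "projB BB (TR (SS ay / (ay - ax)) - TT ay az * TR ((az - ay) / (ay - ax))) = TT ax ay"
    proof -
      have "TR (SS ay / (ay - ax)) = TR (c ay / (ay - ax)) + TT ay az * TR ((az - ay) / (ay - ax))"
        by (rule G[OF _ TTB TTB KIy']) (use dxy in auto)
      then show ?thesis using TTB projB_in by (simp add: TT_def)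
    qed
    have v4: "projB BB (TR (SS az / (az - ax)) - TT az ay * TR ((ay - az) / (az - ax))) = TT ax az"
    proof -
      have "TR (SS az / (az - ax)) = TR (c az / (az - ax)) + TT az ay * TR ((ay - az) / (az - ax))"
        by (rule G[OF _ TTB TTB KIz']) (use dxy in auto)
      then show ?thesis using TTB projB_in by (simp add: TT_def)
    qed
    have v5: "projB BB (TR ((SS ax - (ay - ax) * TT ax ay - (az - ax) * TT ax az) / (ax - ay))) = TT ay ax"
      unfolding TT_def KIx[unfolded TT_def, symmetric] by (rule projB_in[OF tr_in_B[OF pr ch cardF]])
    have v6: "projB BB (TR ((SS ax - (ay - ax) * TT ax ay - (az - ax) * TT ax az) / (ax - az))) = TT az ax"
      unfolding TT_def KIx[unfolded TT_def, symmetric] by (rule projB_in[OF tr_in_B[OF pr ch cardF]])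
    have SvD: "Sv L e (map (TT e) L @ u) = SS e" for e u
    proof -
      have "Sv L e (map (TT e) L @ u) = Sv L e (map (TT e) L)" by (rule Sv_app) simp
      also have "\<dots> = SS e" unfolding Sv_def SS_def
        using sum_nth_distinct[OF dL, of "\<lambda>\<alpha>. (\<alpha> - e) * TT e \<alpha>"] by simp
      finally show ?thesis .
    qed
    have SvD0: "Sv L e (map (TT e) L) = SS e" for e using SvD[of e "[]"] by simp
    define st0 where "st0 = (\<lambda>i::nat. if i < 3 then map (TT (E ! i)) L else [])"
    have ph1: "fold (tx_step c) (dl BB TR L (E ! 0) 0 @ dl BB TR L (E ! 1) 1 @ dl BB TR L (E ! 2) 2) (\<lambda>_. []) = st0"
    proof -
      have pe: "projB BB (TR (c \<alpha> / (\<alpha> - e))) = TT e \<alpha>" for \<alpha> e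
        unfolding TT_def by (rule projB_in[OF tr_in_B[OF pr ch cardF]])
      show ?thesis by (auto simp: fold_dl pe st0_def fun_eq_iff less_Suc_eq numeral_3_eq_3 numeral_2_eq_2)
    qed
    have st0x: "st0 x = map (TT ax) L" and st0y: "st0 y = map (TT ay) L" and st0z: "st0 z = map (TT az) L"
      unfolding st0_def ax_def ay_def az_def using xyz by auto
    have run: "run_protocol c (proto BB TR E L x y z) = fold (tx_step c)
     [(Inr y, z, \<lambda>v. projB BB (TR (Sv L ay v / (ay - az)))),
      (Inr z, y, \<lambda>v. projB BB (TR (Sv L az v / (az - ay)))),
      (Inr y, x, \<lambda>v. projB BB (TR (Sv L ay v / (ay - ax)) - v ! length L * TR ((az - ay) / (ay - ax)))),
      (Inr z, x, \<lambda>v. projB BB (TR (Sv L az v / (az - ax)) - v ! length L * TR ((ay - az) / (az - ax)))),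
      (Inr x, y, \<lambda>v. projB BB (TR (recv L ax ay az v / (ax - ay)))),
      (Inr x, z, \<lambda>v. projB BB (TR (recv L ax ay az v / (ax - az))))] st0"
      unfolding run_protocol_def proto_def Let_def ax_def[symmetric] ay_def[symmetric] az_def[symmetric]
      by (simp only: fold_append comp_def ph1[simplified fold_append comp_def])
    have runx: "run_protocol c (proto BB TR E L x y z) x = map (TT ax) L @ [TT ax ay, TT ax az]"
      using xyz dxy by (simp add: run tx_step_def st0x st0y st0z SvD SvD0 recv_def nth_append v1 v2 v3 v4 v5 v6)
    have runy: "run_protocol c (proto BB TR E L x y z) y = map (TT ay) L @ [TT ay az, TT ay ax]"
      using xyz dxy by (simp add: run tx_step_def st0x st0y st0z SvD SvD0 recv_def nth_append v1 v2 v3 v4 v5 v6)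
    have runz: "run_protocol c (proto BB TR E L x y z) z = map (TT az) L @ [TT az ay, TT az ax]"
      using xyz dxy by (simp add: run tx_step_def st0x st0y st0z SvD SvD0 recv_def nth_append v1 v2 v3 v4 v5 v6)
    have "j = x \<or> j = y \<or> j = z" using all3 j lenE by simp
    then show "(if j = x then recv L ax ay az (run_protocol c (proto BB TR E L x y z) j)
                else if j = y then recv L ay az ax (run_protocol c (proto BB TR E L x y z) j)
                else recv L az ay ax (run_protocol c (proto BB TR E L x y z) j)) = c (E ! j)"
    proof (elim disjE)
      assume "j = x" then show ?thesis using runx KIx by (simp add: recv_def SvD nth_append ax_def)
    next
      assume "j = y" then show ?thesis using runy KIy' xyz by (simp add: recv_def SvD nth_append ay_def)
    next
      assume "j = z" then show ?thesis using runz KIz' xyz by (simp add: recv_def SvD nth_append az_def)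
    qed
  qed
qed

end

lemma proto_length: "length (proto B tr E L x y z) = 3 * length L + 6"
  by (simp add: proto_def dl_def Let_def)

theorem theorem5:
  fixes p m t :: nat
    and a1 a2 a3 :: "'a::{finite,field}"
  assumes "prime p" and "m \<ge> 1" and "t \<ge> 1"
    and "CARD('a) = p ^ (m * t)"
    and "p dvd t"
    and "distinct [a1, a2, a3]"
    and "{(a2 - a1) / (a2 - a3), (a3 - a2) / (a3 - a1), (a1 - a3) / (a1 - a2)}
           \<inter> {x. trace_FB (p ^ m) t x = 0} \<noteq> {}"
  shows "distributed_repair_scheme (subfield_B (p ^ m))
           (RS_code (CARD('a) - CARD('a) div (p ^ m)))
           [a1, a2, a3] (3 * (CARD('a) - 1))"
proof -
  have mt: "m * t \<ge> 1" using assms(2,3) by simp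
  have ch: "CHAR('a) = p" by (rule char_eq[OF assms(1) assms(4) mt])
  have cardF: "CARD('a) = (p ^ m) ^ t" using assms(4) by (simp add: power_mult)
  define E where "E = [a1, a2, a3]"
  obtain L :: "'a list" where L: "distinct L" "set L = UNIV - set E"
    using finite_distinct_list[of "UNIV - set E"] by auto
  have c3: "card (set E) = 3" using assms(6) unfolding E_def by (simp add: distinct_card[of "[a1,a2,a3]", symmetric])
  have "card (set E) \<le> CARD('a)" by (rule card_mono) auto
  then have n3: "CARD('a) \<ge> 3" using c3 by simp
  have lenL: "length L = CARD('a) - 3"
    using L c3 distinct_card[OF L(1)] by (simp add: card_Diff_subset)
  have len: "length (proto (subfield_B (p ^ m)) (trace_FB (p ^ m) t) E L x y z) = 3 * (CARD('a) - 1)" for x y z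
    using lenL n3 by (simp add: proto_length)
  note MR = main_repair[OF assms(1) ch cardF assms(2) assms(3) assms(5)]
  have lenE: "length E = 3" and dE: "distinct E" using assms(6) unfolding E_def by auto
  from assms(7) consider
      "trace_FB (p ^ m) t ((a2 - a1) / (a2 - a3)) = 0"
    | "trace_FB (p ^ m) t ((a3 - a2) / (a3 - a1)) = 0"
    | "trace_FB (p ^ m) t ((a1 - a3) / (a1 - a2)) = 0" by blast
  then show ?thesis
  proof cases
    case 1
    have "trace_FB (p ^ m) t ((E ! 1 - E ! 0) / (E ! 1 - E ! 2)) = 0" using 1 by (simp add: E_def)
    from MR[OF lenE dE _ _ _ _ _ _ this L(2) L(1)] show ?thesis
      unfolding distributed_repair_scheme_def E_def[symmetric] using len by auto
  next
    case 2
    have "trace_FB (p ^ m) t ((E ! 2 - E ! 1) / (E ! 2 - E ! 0)) = 0" using 2 by (simp add: E_def)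
    from MR[OF lenE dE _ _ _ _ _ _ this L(2) L(1)] show ?thesis
      unfolding distributed_repair_scheme_def E_def[symmetric] using len by auto
  next
    case 3
    have "trace_FB (p ^ m) t ((E ! 0 - E ! 2) / (E ! 0 - E ! 1)) = 0" using 3 by (simp add: E_def)
    from MR[OF lenE dE _ _ _ _ _ _ this L(2) L(1)] show ?thesis
      unfolding distributed_repair_scheme_def E_def[symmetric] using len by auto
  qed
qed

end
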